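(* For every strategy profile $s$ with $S_0(s)\vee S_1(s)$: if $\mathsf{SPE}(s)$ then $\mathsf{SAcBes}(s)\vee\mathsf{SBcAes}(s)$.
   Context: Let $P=\{A,B\}$ and $\mathrm{Choice}=\{d,r\}$; a payoff function is $f:P\to\mathbb{R}$. Strategy profiles are elements of the final coalgebra of $X\mapsto\mathbb{R}^P+P\times\mathrm{Choice}\times X\times X$ (finite or infinite trees $\langle f\rangle$ or $\langle p,c,s_d,s_r\rangle$, equality being bisimilarity). The payoff $\widehat{s}$ is the partial function given by $\widehat{\langle f\rangle}=f$, $\widehat{\langle p,d,s_d,s_r\rangle}=\widehat{s_d}$, $\widehat{\langle p,r,s_d,s_r\rangle}=\widehat{s_r}$. Convergence $\downarrow$: least predicate with $\downarrow(s)$ iff $s=\langle f\rangle$, or $s=\langle p,d,s_d,s_r\rangle\wedge\downarrow(s_d)$, or $s=\langle p,r,s_d,s_r\rangle\wedge\downarrow(s_r)$. Strong convergence $\Downarrow$: greatest predicate with $\Downarrow(s)$ iff $s=\langle f\rangle$, or $s=\langle p,c,s_d,s_r\rangle$ with $\downarrow(s),\Downarrow(s_d),\Downarrow(s_r)$. For a predicate $\Phi$, $\Box\Phi$ is the greatest predicate such that $\Box\Phi(s)$ iff $\Phi(s)$ and, whenever $s=\langle p,c,s_d,s_r\rangle$, $\Box\Phi(s_d)$ and $\Box\Phi(s_r)$. $\mathsf{PE}(s)$ holds iff $\Downarrow(s)$ and (if $s=\langle p,d,s_d,s_r\rangle$ then $\widehat{s_d}(p)\ge\widehat{s_r}(p)$)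 and (if $s=\langle p,r,s_d,s_r\rangle$ then $\widehat{s_r}(p)\ge\widehat{s_d}(p)$); $\mathsf{SPE}=\Box\,\mathsf{PE}$. Let $f_{0,1}=(A\mapsto0,B\mapsto1)$, $f_{1,0}=(A\mapsto1,B\mapsto0)$. $S_0,S_1$ are the greatest predicates with $S_0(s)$ iff $s=\langle A,c,\langle f_{0,1}\rangle,s'\rangle$ with $S_1(s')$, and $S_1(s)$ iff $s=\langle B,c,\langle f_{1,0}\rangle,s'\rangle$ with $S_0(s')$. $\mathsf{AcBes}$ is the least predicate such that $\mathsf{AcBes}(s)$ holds iff: whenever $s=\langle p,c,\langle f\rangle,s'\rangle$, then ($p=A$, $f=f_{0,1}$, $c=r$, $\mathsf{AcBes}(s')$) or ($p=B$, $f=f_{1,0}$, and ($c=d$ or $\mathsf{AcBes}(s')$)). Symmetrically $\mathsf{BcAes}$ is the least predicate such that $\mathsf{BcAes}(s)$ holds iff: whenever $s=\langle p,c,\langle f\rangle,s'\rangle$, then ($p=B$, $f=f_{1,0}$, $c=r$, $\mathsf{BcAes}(s')$) or ($p=A$, $f=f_{0,1}$, and ($c=d$ or $\mathsf{BcAes}(s')$)). $\mathsf{SAcBes}=\Box\,\mathsf{AcBes}$ and $\mathsf{SBcAes}=\Box\,\mathsf{BcAes}$. *)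

theory Defs
  imports Complex_Main
begin

datatype player = A | B
datatype choice = d | r

codatatype strat = Leaf "player \<Rightarrow> real" | Node player choice strat strat

inductive conv :: "strat \<Rightarrow> bool" where
  conv_leaf: "conv (Leaf f)"
| conv_d: "conv sd \<Longrightarrow> conv (Node p d sd sr)"
| conv_r: "conv sr \<Longrightarrow> conv (Node p r sd sr)"

(* graph of the partial payoff function \<hat>s *)
inductive payoff_of :: "strat \<Rightarrow> (player \<Rightarrow> real) \<Rightarrow> bool" where
  "payoff_of (Leaf f) f"
| "payoff_of sd f \<Longrightarrow> payoff_of (Node p d sd sr) f"
| "payoff_of sr f \<Longrightarrow> payoff_of (Node p r sd sr) f"

definition payoff :: "strat \<Rightarrow> player \<Rightarrow> real" where
  "payoff s = (THE f. payoff_of s f)"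

coinductive sconv :: "strat \<Rightarrow> bool" where
  sconv_leaf: "sconv (Leaf f)"
| sconv_node: "conv (Node p c sd sr) \<Longrightarrow> sconv sd \<Longrightarrow> sconv sr \<Longrightarrow> sconv (Node p c sd sr)"

coinductive Always :: "(strat \<Rightarrow> bool) \<Rightarrow> strat \<Rightarrow> bool" for \<Phi> where
  "\<Phi> s \<Longrightarrow> (\<forall>p c sd sr. s = Node p c sd sr \<longrightarrow> Always \<Phi> sd \<and> Always \<Phi> sr)
   \<Longrightarrow> Always \<Phi> s"

definition PE :: "strat \<Rightarrow> bool" where
  "PE s \<longleftrightarrow> sconv s
     \<and> (\<forall>p sd sr. s = Node p d sd sr \<longrightarrow> payoff sd p \<ge> payoff sr p)
     \<and> (\<forall>p sd sr. s = Node p r sd sr \<longrightarrow> payoff sr p \<ge> payoff sd p)"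

definition SPE :: "strat \<Rightarrow> bool" where
  "SPE = Always PE"

definition f01 :: "player \<Rightarrow> real" where
  "f01 = (\<lambda>x. if x = A then 0 else 1)"

definition f10 :: "player \<Rightarrow> real" where
  "f10 = (\<lambda>x. if x = A then 1 else 0)"

coinductive S0 :: "strat \<Rightarrow> bool" and S1 :: "strat \<Rightarrow> bool" where
  "S1 s' \<Longrightarrow> S0 (Node A c (Leaf f01) s')"
| "S0 s' \<Longrightarrow> S1 (Node B c (Leaf f10) s')"

inductive AcBes :: "strat \<Rightarrow> bool" where
  "(\<forall>p c f s'. s = Node p c (Leaf f) s' \<longrightarrow>
      (p = A \<and> f = f01 \<and> c = r \<and> AcBes s') \<or>
      (p = B \<and> f = f10 \<and> (c = d \<or> AcBes s'))) \<Longrightarrow> AcBes s"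
monos imp_mono

inductive BcAes :: "strat \<Rightarrow> bool" where
  "(\<forall>p c f s'. s = Node p c (Leaf f) s' \<longrightarrow>
      (p = B \<and> f = f10 \<and> c = r \<and> BcAes s') \<or>
      (p = A \<and> f = f01 \<and> (c = d \<or> BcAes s'))) \<Longrightarrow> BcAes s"
monos imp_mono

definition SAcBes :: "strat \<Rightarrow> bool" where
  "SAcBes = Always AcBes"

definition SBcAes :: "strat \<Rightarrow> bool" where
  "SBcAes = Always BcAes"

end

theory Submission
  imports Defs
begin

lemma payoff_leaf[simp]: "payoff (Leaf f) = f"
  unfolding payoff_def
  by (rule the_equality) (auto intro: payoff_of.intros elim: payoff_of.cases)

lemma payoff_d[simp]: "payoff (Node p d sd sr) = payoff sd"
proof -
  have "payoff_of (Node p d sd sr) = payoff_of sd"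
    by (rule ext) (auto intro: payoff_of.intros elim: payoff_of.cases)
  thus ?thesis unfolding payoff_def by simp
qed

lemma payoff_r[simp]: "payoff (Node p r sd sr) = payoff sr"
proof -
  have "payoff_of (Node p r sd sr) = payoff_of sr"
    by (rule ext) (auto intro: payoff_of.intros elim: payoff_of.cases)
  thus ?thesis unfolding payoff_def by simp
qed

lemma SPE_PE: "SPE t \<Longrightarrow> PE t"
  unfolding SPE_def by (erule Always.cases) auto

lemma SPE_sub: "SPE (Node p c sd sr) \<Longrightarrow> SPE sd \<and> SPE sr"
  unfolding SPE_def by (erule Always.cases) auto

lemma SPE_conv: "SPE t \<Longrightarrow> conv t"
  by (drule SPE_PE) (auto simp: PE_def elim: sconv.cases intro: conv.intros)

definition SS :: "strat \<Rightarrow> bool" where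
  "SS t \<longleftrightarrow> (\<exists>c s'. t = Node A c (Leaf f01) s' \<and> S1 s') \<or> (\<exists>c s'. t = Node B c (Leaf f10) s' \<and> S0 s')"

lemma SS_I: "S0 t \<or> S1 t \<Longrightarrow> SS t"
  unfolding SS_def by (auto elim: S0.cases S1.cases)

lemma SS_next: "t = Node p c x t' \<Longrightarrow> SS t \<Longrightarrow> SS t'"
proof -
  assume t: "t = Node p c x t'" and h: "SS t"
  hence "S0 t' \<or> S1 t'" unfolding SS_def by (auto simp only: strat.inject)
  thus ?thesis by (rule SS_I)
qed

definition NS :: "player \<Rightarrow> strat \<Rightarrow> bool" where
  "NS Q t \<longleftrightarrow> (\<forall>c f t'. t = Node Q c (Leaf f) t' \<longrightarrow> c = r)"

lemma Always_leaf: "\<Phi> (Leaf f) \<Longrightarrow> Always \<Phi> (Leaf f)"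
  by (rule Always.intros) auto

lemma noA:
  assumes "SS t" "SPE t" "payoff t B \<le> 0"
  shows "Always (NS A) t"
  using assms
proof (coinduction arbitrary: t)
  case (Always t)
  from Always(1) obtain c s' where t: "(t = Node A c (Leaf f01) s' \<and> S1 s') \<or> (t = Node B c (Leaf f10) s' \<and> S0 s')"
    unfolding SS_def by blast
  have pe: "PE t" using Always(2) SPE_PE by blast
  show ?case
  proof (cases "t = Node A c (Leaf f01) s'")
    case True
    have cr: "c = r"
    proof (rule ccontr)
      assume "c \<noteq> r" hence "c = d" by (cases c) auto
      thus False using Always(3) True by (simp add: f01_def)
    qed
    have "SS s'" using True t SS_I by auto
    moreover have "SPE s'" using Always(2) True SPE_sub by blast
    moreover have "payoff s' B \<le> 0" using Always(3) True cr by simp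
    ultimately show ?thesis using True cr
      by (auto simp: NS_def intro: Always_leaf)
  next
    case False
    hence T: "t = Node B c (Leaf f10) s'" using t by blast
    have "SS s'" using T t SS_I by auto
    moreover have "SPE s'" using Always(2) T SPE_sub by blast
    moreover have "payoff s' B \<le> 0"
    proof (cases c)
      case d thus ?thesis using pe T by (auto simp: PE_def f10_def)
    next
      case r thus ?thesis using Always(3) T by simp
    qed
    ultimately show ?thesis using T
      by (auto simp: NS_def intro: Always_leaf)
  qed
qed

lemma noB:
  assumes "SS t" "SPE t" "payoff t A \<le> 0"
  shows "Always (NS B) t"
  using assms
proof (coinduction arbitrary: t)
  case (Always t)
  from Always(1) obtain c s' where t: "(t = Node A c (Leaf f01) s' \<and> S1 s') \<or> (t = Node B c (Leaf f10) s' \<and> S0 s')"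
    unfolding SS_def by blast
  have pe: "PE t" using Always(2) SPE_PE by blast
  show ?case
  proof (cases "t = Node B c (Leaf f10) s'")
    case True
    have cr: "c = r"
    proof (rule ccontr)
      assume "c \<noteq> r" hence "c = d" by (cases c) auto
      thus False using Always(3) True by (simp add: f10_def)
    qed
    have "SS s'" using True t SS_I by auto
    moreover have "SPE s'" using Always(2) True SPE_sub by blast
    moreover have "payoff s' A \<le> 0" using Always(3) True cr by simp
    ultimately show ?thesis using True cr
      by (auto simp: NS_def intro: Always_leaf)
  next
    case False
    hence T: "t = Node A c (Leaf f01) s'" using t by blast
    have "SS s'" using T t SS_I by auto
    moreover have "SPE s'" using Always(2) T SPE_sub by blast
    moreover have "payoff s' A \<le> 0"
    proof (cases c)
      case d thus ?thesis using pe T by (auto simp: PE_def f01_def)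
    next
      case r thus ?thesis using Always(3) T by simp
    qed
    ultimately show ?thesis using T
      by (auto simp: NS_def intro: Always_leaf)
  qed
qed

lemma Always_node: "Always \<Phi> (Node p c sd sr) \<Longrightarrow> Always \<Phi> sd \<and> Always \<Phi> sr \<and> \<Phi> (Node p c sd sr)"
  by (erule Always.cases) auto

lemma Always_here: "Always \<Phi> t \<Longrightarrow> \<Phi> t"
  by (erule Always.cases) auto

lemma AcBes_leaf: "AcBes (Leaf f)"
  by (rule AcBes.intros) auto

lemma BcAes_leaf: "BcAes (Leaf f)"
  by (rule BcAes.intros) auto

lemma AcBes_conv: "conv t \<Longrightarrow> SS t \<Longrightarrow> Always (NS A) t \<Longrightarrow> AcBes t"
proof (induction rule: conv.induct)
  case (conv_leaf f) show ?case by (rule AcBes_leaf)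
next
  case (conv_d sd p sr)
  hence "NS A (Node p d sd sr)" using Always_here by blast
  thus ?case using conv_d.prems(1) unfolding SS_def NS_def
    by (intro AcBes.intros) auto
next
  case (conv_r sr p sd)
  have "AcBes sr" using conv_r.IH SS_next[OF refl conv_r.prems(1)] Always_node[OF conv_r.prems(2)] by blast
  thus ?case using conv_r.prems(1) unfolding SS_def
    by (intro AcBes.intros) auto
qed

lemma BcAes_conv: "conv t \<Longrightarrow> SS t \<Longrightarrow> Always (NS B) t \<Longrightarrow> BcAes t"
proof (induction rule: conv.induct)
  case (conv_leaf f) show ?case by (rule BcAes_leaf)
next
  case (conv_d sd p sr)
  hence "NS B (Node p d sd sr)" using Always_here by blast
  thus ?case using conv_d.prems(1) unfolding SS_def NS_def
    by (intro BcAes.intros) auto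
next
  case (conv_r sr p sd)
  have "BcAes sr" using conv_r.IH SS_next[OF refl conv_r.prems(1)] Always_node[OF conv_r.prems(2)] by blast
  thus ?case using conv_r.prems(1) unfolding SS_def
    by (intro BcAes.intros) auto
qed

lemma SA: assumes "SS t0" "SPE t0" "Always (NS A) t0" shows "Always AcBes t0"
proof -
  let ?X = "\<lambda>t. SS t \<and> SPE t \<and> Always (NS A) t"
  have "?X t0" using assms by blast
  thus ?thesis
  proof (rule Always.coinduct[where X="?X"])
    fix t assume H: "?X t"
    hence H1: "SS t" and H2: "SPE t" and H3: "Always (NS A) t" by auto
    from H1 obtain p c f s' where t: "t = Node p c (Leaf f) s'"
      unfolding SS_def by blast
    have a: "AcBes t" by (rule AcBes_conv[OF SPE_conv[OF H2] H1 H3])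
    have "SS s'" using SS_next[OF t H1] .
    moreover have "SPE s'" using SPE_sub H2 unfolding t by blast
    moreover have "Always (NS A) s'" using Always_node H3 unfolding t by blast
    ultimately have b: "?X s'" by blast
    have l: "Always AcBes (Leaf f)" by (rule Always_leaf, rule AcBes_leaf)
    show "\<exists>s. t = s \<and> AcBes s \<and> (\<forall>p c sd sr. s = Node p c sd sr \<longrightarrow>
             (?X sd \<or> Always AcBes sd) \<and> (?X sr \<or> Always AcBes sr))"
      using a b l t by simp
  qed
qed

lemma SB: assumes "SS t0" "SPE t0" "Always (NS B) t0" shows "Always BcAes t0"
proof -
  let ?X = "\<lambda>t. SS t \<and> SPE t \<and> Always (NS B) t"
  have "?X t0" using assms by blast
  thus ?thesis
  proof (rule Always.coinduct[where X="?X"])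
    fix t assume H: "?X t"
    hence H1: "SS t" and H2: "SPE t" and H3: "Always (NS B) t" by auto
    from H1 obtain p c f s' where t: "t = Node p c (Leaf f) s'"
      unfolding SS_def by blast
    have a: "BcAes t" by (rule BcAes_conv[OF SPE_conv[OF H2] H1 H3])
    have "SS s'" using SS_next[OF t H1] .
    moreover have "SPE s'" using SPE_sub H2 unfolding t by blast
    moreover have "Always (NS B) s'" using Always_node H3 unfolding t by blast
    ultimately have b: "?X s'" by blast
    have l: "Always BcAes (Leaf f)" by (rule Always_leaf, rule BcAes_leaf)
    show "\<exists>s. t = s \<and> BcAes s \<and> (\<forall>p c sd sr. s = Node p c sd sr \<longrightarrow>
             (?X sd \<or> Always BcAes sd) \<and> (?X sr \<or> Always BcAes sr))"
      using a b l t by simp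
  qed
qed

lemma main: "conv t \<Longrightarrow> SS t \<Longrightarrow> SPE t \<Longrightarrow> Always AcBes t \<or> Always BcAes t"
proof (induction rule: conv.induct)
  case (conv_leaf f) thus ?case by (auto intro: Always_leaf AcBes_leaf)
next
  case (conv_d sd p sr)
  let ?t = "Node p d sd sr"
  show ?case
  proof (cases p)
    case A
    hence "payoff ?t A \<le> 0" using conv_d.prems(1) unfolding SS_def by (auto simp: f01_def)
    hence "Always (NS B) ?t" using noB conv_d.prems by blast
    thus ?thesis using SB conv_d.prems by blast
  next
    case B
    hence "payoff ?t B \<le> 0" using conv_d.prems(1) unfolding SS_def by (auto simp: f10_def)
    hence "Always (NS A) ?t" using noA conv_d.prems by blast
    thus ?thesis using SA conv_d.prems by blast
  qed
next
  case (conv_r sr p sd)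
  have IH: "Always AcBes sr \<or> Always BcAes sr"
    using conv_r.IH SS_next[OF refl conv_r.prems(1)] SPE_sub[OF conv_r.prems(2)] by blast
  obtain f where sd: "sd = Leaf f" using conv_r.prems(1) unfolding SS_def by blast
  from IH show ?case
  proof
    assume h: "Always AcBes sr"
    have a: "AcBes (Node p r sd sr)" using conv_r.prems(1) Always_here[OF h]
      unfolding SS_def by (intro AcBes.intros) auto
    have "Always AcBes (Node p r sd sr)"
    proof (rule Always.intros)
      show "AcBes (Node p r sd sr)" by (rule a)
      show "\<forall>pa c sda sra. Node p r sd sr = Node pa c sda sra \<longrightarrow> Always AcBes sda \<and> Always AcBes sra"
        using h sd by (auto intro: Always_leaf AcBes_leaf)
    qed
    thus ?thesis by blast
  next
    assume h: "Always BcAes sr"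
    have a: "BcAes (Node p r sd sr)" using conv_r.prems(1) Always_here[OF h]
      unfolding SS_def by (intro BcAes.intros) auto
    have "Always BcAes (Node p r sd sr)"
    proof (rule Always.intros)
      show "BcAes (Node p r sd sr)" by (rule a)
      show "\<forall>pa c sda sra. Node p r sd sr = Node pa c sda sra \<longrightarrow> Always BcAes sda \<and> Always BcAes sra"
        using h sd by (auto intro: Always_leaf BcAes_leaf)
    qed
    thus ?thesis by blast
  qed
qed

theorem mainTheorem11:
  fixes s :: strat
  assumes "S0 s \<or> S1 s"
    and "SPE s"
  shows "SAcBes s \<or> SBcAes s"
  using main[OF SPE_conv[OF assms(2)] SS_I[OF assms(1)] assms(2)]
  unfolding SAcBes_def SBcAes_def .

end
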